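(* Let $X$ be a real Hilbert space with inner product $\langle\cdot,\cdot\rangle_X$, let $E\colon X\to\mathbb R$ be a twice differentiable convex energy, and let $P\colon\mathbb R^p\to X$, $\theta\mapsto u_\theta$, be a differentiable parametrization. Set $L(\theta)\coloneqq E(u_\theta)$, let $\nabla L(\theta)\in\mathbb R^p$ be its Euclidean gradient, define the energy Gram matrix $G_E(\theta)\in\mathbb R^{p\times p}$ by $G_E(\theta)_{ij}\coloneqq D^2E(u_\theta)(\partial_{\theta_i}u_\theta,\partial_{\theta_j}u_\theta)$, and define the energy natural gradient $\nabla^E L(\theta)\coloneqq G_E(\theta)^+\nabla L(\theta)$. Let $T_\theta\mathcal F_\Theta\coloneqq\operatorname{span}\{\partial_{\theta_i}u_\theta : i=1,\dots,p\}\subseteq X$ and let $DP_\theta\colon\mathbb R^p\to X$ denote the derivative of $P$ at $\theta$. (i) If $D^2E(u)$ is coercive for every $u\in X$, then $$DP_\theta\nabla^EL(\theta) = \Pi_{T_\theta \mathcal F_\Theta}^{D^2E(u_\theta)}\big(D^2E(u_\theta)^{-1} \nabla E(u_\theta)\big),$$ where $D^2E(u_\theta)$ is identified (via the Riesz representation) with an operator $X\to X$, $\nabla E(u_\theta)\in X$ is the gradient of $E$ with respect to $\langle\cdot,\cdot\rangle_X$, and $\Pi_{T_\theta \mathcal F_\Theta}^{D^2E(u_\theta)}$ denotes the orthogonal projection onto $T_\theta\mathcal F_\Theta$ with respect to the inner product $(v,w)\mapsto D^2E(u_\theta)(v,w)$. (ii) If $E$ is a quadratic function whose second derivative $D^2E=a$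 is a bounded, positive definite symmetric bilinear form on $X$, and $E$ admits a minimizer $u^*\in X$, then $$DP_\theta\nabla^EL(\theta) = \Pi_{T_\theta \mathcal F_\Theta}^{a}( u_\theta - u^* ),$$ where $\Pi_{T_\theta \mathcal F_\Theta}^{a}$ denotes the orthogonal projection onto $T_\theta\mathcal F_\Theta$ with respect to the inner product $a$.
   Context: For a matrix $A$, $A^+$ denotes any pseudo-inverse of $A$ (a generalized inverse, i.e. a matrix with $AA^+A=A$). For a finite-dimensional subspace $V$ of a vector space with inner product $b$, the projection $\Pi^b_V(x)$ is the unique element of $V$ with $b(\Pi^b_V(x),z)=b(x,z)$ for all $z\in V$. *)

theory Defs
  imports "HOL-Analysis.Analysis"
begin

definition bproj :: "('a \<Rightarrow> 'a \<Rightarrow> real) \<Rightarrow> 'a set \<Rightarrow> 'a \<Rightarrow> 'a" where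
  "bproj b V x = (THE y. y \<in> V \<and> (\<forall>z\<in>V. b y z = b x z))"

definition egrad :: "(real^'p \<Rightarrow> real) \<Rightarrow> real^'p \<Rightarrow> real^'p" where
  "egrad f x = (\<chi> i. frechet_derivative f (at x) (axis i 1))"

definition partials :: "(real^'p \<Rightarrow> 'a::real_vector) \<Rightarrow> 'p \<Rightarrow> 'a" where
  "partials DPt i = DPt (axis i 1)"

definition energy_gram :: "('a \<Rightarrow> 'a \<Rightarrow> real) \<Rightarrow> (real^'p \<Rightarrow> 'a::real_vector) \<Rightarrow> real^'p^'p" where
  "energy_gram D2 DPt = (\<chi> i j. D2 (partials DPt i) (partials DPt j))"

definition quadratic_fun :: "('a::real_normed_vector \<Rightarrow> real) \<Rightarrow> bool" where
  "quadratic_fun E \<longleftrightarrow> (\<exists>q l c. bounded_bilinear q \<and> bounded_linear l \<and>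
       (\<forall>u. E u = q u u + l u + c))"

end

theory Submission
  imports Defs
begin


lemma lin_expand:
  fixes D :: "real^'p \<Rightarrow> 'a::real_vector"
  assumes lD: "linear D"
  shows "D c = (\<Sum>i\<in>UNIV. c$i *\<^sub>R D (axis i 1))"
proof -
  have "D c = D (\<Sum>i\<in>UNIV. c$i *\<^sub>R axis i 1)"
    using basis_expansion[of c] by (simp add: scalar_mult_eq_scaleR)
  also have "\<dots> = (\<Sum>i\<in>UNIV. c$i *\<^sub>R D (axis i 1))"
    by (simp add: linear_sum[OF lD] linear_scale[OF lD])
  finally show ?thesis .
qed

lemma core:
  fixes D :: "real^'p \<Rightarrow> 'a::real_inner" and H :: "'a \<Rightarrow> 'a"
  assumes lD: "linear D" and lH: "linear H"
    and sym: "\<And>v w. H v \<bullet> w = H w \<bullet> v" and pd: "\<And>v. v \<noteq> 0 \<Longrightarrow> H v \<bullet> v > 0"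
    and pinv: "energy_gram (\<lambda>v w. H v \<bullet> w) D ** Gp ** energy_gram (\<lambda>v w. H v \<bullet> w) D
               = energy_gram (\<lambda>v w. H v \<bullet> w) D"
    and gL: "\<And>k. gL $ k = H x \<bullet> D (axis k 1)"
  shows "D (Gp *v gL) = bproj (\<lambda>v w. H v \<bullet> w) (span (range (partials D))) x"
proof -
  define G where "G = energy_gram (\<lambda>v w. H v \<bullet> w) D"
  have bform: "H (D e) \<bullet> D c = e \<bullet> (G *v c)" for e c
    apply (subst (1 2) lin_expand[OF lD])
    by (simp add: G_def inner_sum_left inner_sum_right linear_sum[OF lH] linear_scale[OF lH]
        inner_vec_def matrix_vector_mult_def energy_gram_def partials_def sum_distrib_left mult_ac)
       (rule sum.swap)
  have lform: "H x \<bullet> D c = gL \<bullet> c" for c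
    apply (subst lin_expand[OF lD])
    by (simp add: inner_sum_right inner_vec_def gL mult_ac)
  have Gsym: "transpose G = G"
    by (simp add: vec_eq_iff transpose_def G_def energy_gram_def partials_def sym)
  define f where "f = (\<lambda>c. G *v c)"
  have lf: "linear f" unfolding f_def by (rule matrix_vector_mul_linear)
  have adj: "adjoint f = f" unfolding f_def adjoint_matrix Gsym ..
  have "gL \<in> (f -` {0})\<^sup>\<bottom>"
  proof -
    have "z \<bullet> gL = 0" if "f z = 0" for z
    proof -
      have "H (D z) \<bullet> D z = 0" using that bform[of z z] by (simp add: f_def)
      then have "D z = 0" using pd by force
      then show ?thesis using lform[of z] by (simp add: inner_commute)
    qed
    then show ?thesis by (auto simp: orthogonal_comp_def orthogonal_def)
  qed
  also have "(f -` {0})\<^sup>\<bottom> = range f"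
    using ker_orthogonal_comp_adjoint[OF lf] adj
    by (metis linear_subspace_image orthogonal_comp_self subspace_UNIV lf)
  finally obtain c where c: "gL = G *v c" unfolding f_def by auto
  have GG: "G *v (Gp *v gL) = gL"
    proof -
    have "G *v (Gp *v (G *v c)) = (G ** Gp ** G) *v c"
      by (metis matrix_vector_mul_assoc matrix_mul_assoc)
    then show ?thesis using pinv unfolding G_def[symmetric] c by simp
  qed
  define y where "y = D (Gp *v gL)"
  have Vr: "span (range (partials D)) = range D"
  proof
    show "span (range (partials D)) \<subseteq> range D"
    proof (rule span_minimal)
      show "range (partials D) \<subseteq> range D" by (auto simp: partials_def)
      show "subspace (range D)" by (rule linear_subspace_image[OF lD subspace_UNIV])
    qed
    show "range D \<subseteq> span (range (partials D))"
    proof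
      fix z assume "z \<in> range D"
      then obtain c where "z = D c" by auto
      then show "z \<in> span (range (partials D))"
      proof -
        have "D c = (\<Sum>i\<in>UNIV. c$i *\<^sub>R partials D i)"
          unfolding partials_def by (rule lin_expand[OF lD])
        also have "\<dots> \<in> span (range (partials D))"
          by (intro span_sum span_scale span_base) auto
        finally show ?thesis using \<open>z = D c\<close> by simp
      qed
    qed
  qed
  have yprop: "y \<in> range D \<and> (\<forall>z\<in>range D. H y \<bullet> z = H x \<bullet> z)"
  proof (intro conjI ballI)
    show "y \<in> range D" by (simp add: y_def)
    fix z assume "z \<in> range D"
    then obtain c' where z: "z = D c'" by auto
    have "H y \<bullet> z = H (D c') \<bullet> y" using sym z by simp
    also have "\<dots> = c' \<bullet> gL" by (simp add: y_def bform GG)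
    also have "\<dots> = H x \<bullet> z" by (metis z lform inner_commute)
    finally show "H y \<bullet> z = H x \<bullet> z" .
  qed
  have uniq: "y' = y" if "y' \<in> range D \<and> (\<forall>z\<in>range D. H y' \<bullet> z = H x \<bullet> z)" for y'
  proof -
    have sub: "subspace (range D)" by (rule linear_subspace_image[OF lD subspace_UNIV])
    have w: "y' - y \<in> range D" using that yprop subspace_diff[OF sub] by blast
    have "H (y' - y) \<bullet> (y' - y) = H y' \<bullet> (y' - y) - H y \<bullet> (y' - y)"
      by (simp add: linear_diff[OF lH] inner_diff_left)
    also have "\<dots> = 0"
    proof -
      have "H y' \<bullet> (y' - y) = H x \<bullet> (y' - y)" using that w by blast
      moreover have "H y \<bullet> (y' - y) = H x \<bullet> (y' - y)" using yprop w by blast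
      ultimately show ?thesis by simp
    qed
    finally show ?thesis using pd[of "y' - y"] by fastforce
  qed
  show ?thesis
    unfolding bproj_def Vr y_def[symmetric]
    proof (rule the_equality[symmetric])
      show "y \<in> range D \<and> (\<forall>z\<in>range D. H y \<bullet> z = H x \<bullet> z)" by (rule yprop)
      show "\<And>y'. y' \<in> range D \<and> (\<forall>z\<in>range D. H y' \<bullet> z = H x \<bullet> z) \<Longrightarrow> y' = y" by (rule uniq)
    qed
qed



lemma hess_bound:
  fixes E :: "'a::real_inner \<Rightarrow> real" and gradE H :: "'a \<Rightarrow> 'a"
  assumes Ed: "\<And>u. (E has_derivative (\<lambda>v. gradE u \<bullet> v)) (at u)"
    and lH: "linear H"
    and dl: "\<And>y. norm (y - u) < d \<Longrightarrow> norm (gradE y - gradE u - H (y - u)) \<le> e * norm (y - u)"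
    and s: "s > 0" "s * (norm v + norm w) < d" and e: "e \<ge> 0"
  shows "\<bar>E (u + s *\<^sub>R v + s *\<^sub>R w) - E (u + s *\<^sub>R v) - E (u + s *\<^sub>R w) + E u - s^2 * (H v \<bullet> w)\<bar>
           \<le> e * s * (norm v + 2 * norm w) * (s * norm w)"
proof -
  define g where "g x = E (u + s *\<^sub>R v + x) - E (u + x) - s * (H v \<bullet> x)" for x
  define S where "S = cball (0::'a) (s * norm w)"
  define a where "a x = gradE (u + s *\<^sub>R v + x) - gradE (u + x) - s *\<^sub>R H v" for x
  have der: "(g has_derivative (\<lambda>z. a x \<bullet> z)) (at x within S)" for x
  proof -
    have h1: "((\<lambda>x. u + s *\<^sub>R v + x) has_derivative (\<lambda>z. z)) (at x)"
      by (auto intro!: derivative_eq_intros)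
    have h2: "((\<lambda>x. u + x) has_derivative (\<lambda>z. z)) (at x)"
      by (auto intro!: derivative_eq_intros)
    have d1: "((\<lambda>x. E (u + s *\<^sub>R v + x)) has_derivative (\<lambda>z. gradE (u + s *\<^sub>R v + x) \<bullet> z)) (at x)"
      using has_derivative_compose[OF h1 Ed] .
    have d2: "((\<lambda>x. E (u + x)) has_derivative (\<lambda>z. gradE (u + x) \<bullet> z)) (at x)"
      using has_derivative_compose[OF h2 Ed] .
    have bl: "bounded_linear (\<lambda>x. s * (H v \<bullet> x))"
      by (intro bounded_linear_const_mult bounded_linear_inner_right)
    have d3: "((\<lambda>x. s * (H v \<bullet> x)) has_derivative (\<lambda>x. s * (H v \<bullet> x))) (at x)"
      using bounded_linear_imp_has_derivative[OF bl] .
    have "(g has_derivative (\<lambda>z. gradE (u + s *\<^sub>R v + x) \<bullet> z - gradE (u + x) \<bullet> z - s * (H v \<bullet> z))) (at x)"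
      unfolding g_def by (intro has_derivative_diff d1 d2 d3)
    moreover have "(\<lambda>z. gradE (u + s *\<^sub>R v + x) \<bullet> z - gradE (u + x) \<bullet> z - s * (H v \<bullet> z)) = (\<lambda>z. a x \<bullet> z)"
      by (auto simp: a_def inner_diff_left)
    ultimately show ?thesis by (simp add: has_derivative_at_withinI)
  qed
  define B where "B = e * s * (norm v + 2 * norm w)"
  have bnd: "onorm (\<lambda>z. a x \<bullet> z) \<le> B" if "x \<in> S" for x
  proof -
    have xs: "norm x \<le> s * norm w" using that by (simp add: S_def)
    have "a x = (gradE (u + s *\<^sub>R v + x) - gradE u - H ((u + s *\<^sub>R v + x) - u))
              - (gradE (u + x) - gradE u - H ((u + x) - u))"
      by (simp add: a_def linear_add[OF lH] linear_scale[OF lH] algebra_simps)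
    then have "norm (a x) \<le> norm (gradE (u + s *\<^sub>R v + x) - gradE u - H ((u + s *\<^sub>R v + x) - u))
              + norm (gradE (u + x) - gradE u - H ((u + x) - u))"
      by (metis norm_triangle_ineq4)
    also have "\<dots> \<le> e * norm (s *\<^sub>R v + x) + e * norm x"
    proof (rule add_mono)
      have n1: "norm (s *\<^sub>R v + x) \<le> s * norm v + s * norm w"
        using norm_triangle_ineq[of "s *\<^sub>R v" x] xs s by simp
      have "norm ((u + s *\<^sub>R v + x) - u) < d" using n1 s by (simp add: algebra_simps)
      from dl[OF this] show "norm (gradE (u + s *\<^sub>R v + x) - gradE u - H ((u + s *\<^sub>R v + x) - u)) \<le> e * norm (s *\<^sub>R v + x)"
        by (simp add: add.assoc)
      have "norm ((u + x) - u) < d" using xs s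
        by (smt (verit, best) add_diff_cancel_left' mult_nonneg_nonneg norm_ge_zero distrib_left)
      from dl[OF this] show "norm (gradE (u + x) - gradE u - H ((u + x) - u)) \<le> e * norm x" by simp
    qed
    also have "\<dots> \<le> e * (s * norm v + s * norm w) + e * (s * norm w)"
    proof -
      have n1: "norm (s *\<^sub>R v + x) \<le> s * norm v + s * norm w"
        using norm_triangle_ineq[of "s *\<^sub>R v" x] xs s by simp
      show ?thesis using mult_left_mono[OF n1 e] mult_left_mono[OF xs e] by linarith
    qed
    also have "\<dots> = B" by (simp add: B_def algebra_simps)
    finally have na: "norm (a x) \<le> B" .
    have B0: "0 \<le> B" using e s by (simp add: B_def)
    show ?thesis
    proof (rule onorm_bound[OF B0])
      fix z
      have "norm (a x \<bullet> z) \<le> norm (a x) * norm z" using Cauchy_Schwarz_ineq2 by simp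
      also have "\<dots> \<le> B * norm z" by (rule mult_right_mono[OF na norm_ge_zero])
      finally show "norm (a x \<bullet> z) \<le> B * norm z" .
    qed
  qed
  have cS: "convex S" unfolding S_def by simp
  have "norm (g (s *\<^sub>R w) - g 0) \<le> B * norm (s *\<^sub>R w - 0)"
    by (rule differentiable_bound[OF cS der bnd])
       (use s in \<open>auto simp: S_def\<close>)
  moreover have "g (s *\<^sub>R w) - g 0 = E (u + s *\<^sub>R v + s *\<^sub>R w) - E (u + s *\<^sub>R v) - E (u + s *\<^sub>R w) + E u - s^2 * (H v \<bullet> w)"
    by (simp add: g_def power2_eq_square)
  ultimately show ?thesis using s by (simp add: B_def)
qed

lemma hess_sym:
  fixes E :: "'a::real_inner \<Rightarrow> real" and gradE H :: "'a \<Rightarrow> 'a"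
  assumes Ed: "\<And>u. (E has_derivative (\<lambda>v. gradE u \<bullet> v)) (at u)"
    and Hd: "(gradE has_derivative H) (at u)"
  shows "H v \<bullet> w = H w \<bullet> v"
proof -
  have lH: "linear H" using has_derivative_linear[OF Hd] .
  define C where "C = (norm v + 2 * norm w) * norm w + (norm w + 2 * norm v) * norm v"
  have C0: "C \<ge> 0" by (simp add: C_def)
  have key: "\<bar>H v \<bullet> w - H w \<bullet> v\<bar> \<le> e * C" if e: "e > 0" for e
  proof -
    obtain d where d: "d > 0" and dl: "\<And>y. norm (y - u) < d \<Longrightarrow> norm (gradE y - gradE u - H (y - u)) \<le> e * norm (y - u)"
      using Hd e unfolding has_derivative_at_alt by blast
    define s where "s = d / (2 * (norm v + norm w + 1))"
    have pos: "0 < 2 * (norm v + norm w + 1)" by (intro mult_pos_pos add_nonneg_pos add_nonneg_nonneg norm_ge_zero) auto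
    have s0: "s > 0" using d pos unfolding s_def by (rule divide_pos_pos)
    have "s * (norm v + norm w) < s * (2 * (norm v + norm w + 1))"
      using s0 norm_ge_zero[of v] norm_ge_zero[of w] by (intro mult_strict_left_mono) (smt (verit))+
    also have "\<dots> = d" unfolding s_def using pos by simp
    finally have sd: "s * (norm v + norm w) < d" .
    have sd': "s * (norm w + norm v) < d" using sd by (simp add: add.commute)
    note b1 = hess_bound[OF Ed lH dl s0 sd less_imp_le[OF e]]
    note b2 = hess_bound[OF Ed lH dl s0 sd' less_imp_le[OF e]]
    have eq: "u + s *\<^sub>R w + s *\<^sub>R v = u + s *\<^sub>R v + s *\<^sub>R w" by (simp add: algebra_simps)
    have "s^2 * \<bar>H v \<bullet> w - H w \<bullet> v\<bar> = \<bar>s^2 * (H v \<bullet> w) - s^2 * (H w \<bullet> v)\<bar>"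
      by (simp add: abs_mult right_diff_distrib[symmetric])
    also have "\<dots> \<le> e * s * (norm v + 2 * norm w) * (s * norm w) + e * s * (norm w + 2 * norm v) * (s * norm v)"
      using b1 b2 unfolding eq by linarith
    also have "\<dots> = s^2 * (e * C)" by (simp add: C_def power2_eq_square algebra_simps)
    finally show ?thesis using s0 by simp
  qed
  show ?thesis
  proof (rule ccontr)
    assume ne: "H v \<bullet> w \<noteq> H w \<bullet> v"
    define e where "e = \<bar>H v \<bullet> w - H w \<bullet> v\<bar> / (2 * (C + 1))"
    have e0: "e > 0" using ne C0 by (simp add: e_def)
    have "e * C < \<bar>H v \<bullet> w - H w \<bullet> v\<bar>"
    proof -
      have "e * C \<le> e * (C + 1)" using e0 by simp
      also have "\<dots> = \<bar>H v \<bullet> w - H w \<bullet> v\<bar> / 2" using C0 unfolding e_def by (auto simp: field_simps)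
      also have "\<dots> < \<bar>H v \<bullet> w - H w \<bullet> v\<bar>" using ne by simp
      finally show ?thesis .
    qed
    with key[OF e0] show False by linarith
  qed
qed



lemma coercive_surj:
  fixes H :: "'a::{real_inner,complete_space} \<Rightarrow> 'a"
  assumes bl: "bounded_linear H" and c: "c > 0" and co: "\<And>v. c * (norm v)\<^sup>2 \<le> H v \<bullet> v"
  shows "\<exists>x. H x = g"
proof -
  obtain K0 where K0: "K0 > 0" "\<And>x. norm (H x) \<le> norm x * K0"
    using bounded_linear.pos_bounded[OF bl] by blast
  define K where "K = max K0 c"
  have K: "K > 0" "K \<ge> c" using K0 c by (auto simp: K_def)
  have HK: "norm (H x) \<le> K * norm x" for x
    using K0(2)[of x] by (smt (verit) K_def max.cobounded1 mult.commute mult_right_mono norm_ge_zero)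
  define t where "t = c / K^2"
  have t0: "t > 0" using c K by (simp add: t_def)
  define q where "q = sqrt (1 - c^2 / K^2)"
  have cK: "c^2 / K^2 \<le> 1" using K c by (simp add: power_mono)
  have cK0: "c^2 / K^2 > 0" using K c by simp
  have q0: "0 \<le> q" "q < 1" using cK cK0 by (auto simp: q_def)
  define T where "T x = x - t *\<^sub>R (H x - g)" for x
  have lH: "linear H" using bl bounded_linear.linear by blast
  have contr: "norm (z - t *\<^sub>R H z) \<le> q * norm z" for z
  proof -
    have "(norm (z - t *\<^sub>R H z))^2 = (norm z)^2 - 2 * t * (H z \<bullet> z) + t^2 * (norm (H z))^2"
      by (simp only: power2_norm_eq_inner) (simp add: inner_diff_left inner_diff_right inner_commute power2_eq_square algebra_simps)
    also have "\<dots> \<le> (norm z)^2 - 2 * t * (c * (norm z)^2) + t^2 * (K^2 * (norm z)^2)"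
    proof -
      have "2 * t * (c * (norm z)^2) \<le> 2 * t * (H z \<bullet> z)" using co[of z] t0 by simp
      moreover have "(norm (H z))^2 \<le> (K * norm z)^2" using HK[of z] by (simp add: power_mono)
      then have "t^2 * (norm (H z))^2 \<le> t^2 * (K^2 * (norm z)^2)" by (simp add: power_mult_distrib mult_left_mono)
      ultimately show ?thesis by linarith
    qed
    also have "\<dots> = (q * norm z)^2"
      using K cK by (simp add: q_def t_def power_mult_distrib field_simps power2_eq_square)
    finally show ?thesis using q0 by (meson power2_le_imp_le mult_nonneg_nonneg norm_ge_zero)
  qed
  have "\<forall>x y. dist (T x) (T y) \<le> q * dist x y"
  proof (intro allI)
    fix x y
    have "T x - T y = (x - y) - t *\<^sub>R H (x - y)"
      by (simp add: T_def linear_diff[OF lH] algebra_simps)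
    then show "dist (T x) (T y) \<le> q * dist x y" using contr by (simp add: dist_norm)
  qed
  then obtain x where "T x = x" using banach_fix_type[OF q0] by blast
  then have "t *\<^sub>R (H x - g) = 0" by (simp add: T_def)
  then show ?thesis using t0 by auto
qed


theorem theorem1:
  fixes E :: "'a::{real_inner, complete_space} \<Rightarrow> real"
    and gradE :: "'a \<Rightarrow> 'a"
    and HE :: "'a \<Rightarrow> 'a \<Rightarrow> 'a"
    and P :: "real^'p \<Rightarrow> 'a"
    and DP :: "real^'p \<Rightarrow> real^'p \<Rightarrow> 'a"
    and \<theta> :: "real^'p"
    and Gp :: "real^'p^'p"
  assumes E_diff: "\<And>u. (E has_derivative (\<lambda>v. gradE u \<bullet> v)) (at u)"
    and E_twice: "\<And>u. (gradE has_derivative HE u) (at u)"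
    and E_convex: "convex_on UNIV E"
    and P_diff: "\<And>t. (P has_derivative DP t) (at t)"
    and pinv: "energy_gram (\<lambda>v w. HE (P \<theta>) v \<bullet> w) (DP \<theta>) ** Gp
                 ** energy_gram (\<lambda>v w. HE (P \<theta>) v \<bullet> w) (DP \<theta>)
               = energy_gram (\<lambda>v w. HE (P \<theta>) v \<bullet> w) (DP \<theta>)"
  shows "((\<forall>u. \<exists>c>0. \<forall>v. c * (norm v)\<^sup>2 \<le> HE u v \<bullet> v) \<longrightarrow>
            DP \<theta> (Gp *v egrad (E \<circ> P) \<theta>)
            = bproj (\<lambda>v w. HE (P \<theta>) v \<bullet> w) (span (range (partials (DP \<theta>))))
                    (inv (HE (P \<theta>)) (gradE (P \<theta>))))
       \<and> (\<forall>a ustar. quadratic_fun E \<and> bounded_bilinear a \<and> (\<forall>v w. a v w = a w v)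
             \<and> (\<forall>v. v \<noteq> 0 \<longrightarrow> a v v > 0)
             \<and> (\<forall>u v w. HE u v \<bullet> w = a v w)
             \<and> (\<forall>u. E ustar \<le> E u) \<longrightarrow>
            DP \<theta> (Gp *v egrad (E \<circ> P) \<theta>)
            = bproj a (span (range (partials (DP \<theta>)))) (P \<theta> - ustar))"
proof -
  define H where "H = HE (P \<theta>)"
  define g where "g = gradE (P \<theta>)"
  have blH: "bounded_linear H" unfolding H_def using has_derivative_bounded_linear[OF E_twice] .
  have lH: "linear H" using blH bounded_linear.linear by blast
  have lD: "linear (DP \<theta>)" using has_derivative_linear[OF P_diff] .
  have EP: "((E \<circ> P) has_derivative (\<lambda>v. g \<bullet> DP \<theta> v)) (at \<theta>)"
    unfolding g_def o_def using has_derivative_compose[OF P_diff E_diff] .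
  have gL: "egrad (E \<circ> P) \<theta> $ k = g \<bullet> DP \<theta> (axis k 1)" for k
    using frechet_derivative_at[OF EP] unfolding egrad_def by (metis vec_lambda_beta)
  have part1: "DP \<theta> (Gp *v egrad (E \<circ> P) \<theta>)
            = bproj (\<lambda>v w. HE (P \<theta>) v \<bullet> w) (span (range (partials (DP \<theta>))))
                    (inv (HE (P \<theta>)) (gradE (P \<theta>)))"
    if co: "\<forall>u. \<exists>c>0. \<forall>v. c * (norm v)\<^sup>2 \<le> HE u v \<bullet> v"
  proof -
    obtain c where c: "c > 0" "\<And>v. c * (norm v)\<^sup>2 \<le> H v \<bullet> v" using co unfolding H_def by blast
    have sym: "H v \<bullet> w = H w \<bullet> v" for v w
      unfolding H_def by (rule hess_sym[OF E_diff E_twice])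
    have pd: "H v \<bullet> v > 0" if "v \<noteq> 0" for v
      using c(2)[of v] c(1) that by (smt (verit) mult_pos_pos zero_less_norm_iff zero_less_power)
    obtain x0 where "H x0 = g" using coercive_surj[OF blH c] by blast
    then have Hx: "H (inv H g) = g" by (metis f_inv_into_f rangeI)
    have gL': "\<And>k. egrad (E \<circ> P) \<theta> $ k = H (inv H g) \<bullet> DP \<theta> (axis k 1)"
      by (simp only: gL Hx)
    have pd': "\<And>v. v \<noteq> 0 \<Longrightarrow> H v \<bullet> v > 0" using pd by blast
    have sym': "\<And>v w. H v \<bullet> w = H w \<bullet> v" using sym by blast
    show ?thesis
      unfolding H_def[symmetric] g_def[symmetric]
      using core[OF lD lH sym' pd' pinv[folded H_def] gL'] .

  qed
  have part2: "DP \<theta> (Gp *v egrad (E \<circ> P) \<theta>)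
            = bproj a (span (range (partials (DP \<theta>)))) (P \<theta> - ustar)"
    if a: "quadratic_fun E \<and> bounded_bilinear a \<and> (\<forall>v w. a v w = a w v)
             \<and> (\<forall>v. v \<noteq> 0 \<longrightarrow> a v v > 0)
             \<and> (\<forall>u v w. HE u v \<bullet> w = a v w)
             \<and> (\<forall>u. E ustar \<le> E u)" for a ustar
  proof -
    have asym: "\<And>v w. a v w = a w v" using a by blast
    have apd: "\<And>v. v \<noteq> 0 \<Longrightarrow> a v v > 0" using a by blast
    have aHE: "\<And>u v w. HE u v \<bullet> w = a v w" using a by blast
    have amin: "\<And>u. E ustar \<le> E u" using a by blast
    have aH: "a = (\<lambda>v w. H v \<bullet> w)" unfolding H_def by (intro ext) (simp only: aHE)
    have HEc: "HE u = H" for u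
    proof
      fix v
      have "(HE u v - H v) \<bullet> (HE u v - H v) = 0"
        unfolding inner_diff_left H_def aHE by simp
      then show "HE u v = H v" by simp
    qed
    have sym: "H v \<bullet> w = H w \<bullet> v" for v w unfolding H_def aHE by (rule asym)
    have pd: "H v \<bullet> v > 0" if "v \<noteq> 0" for v unfolding H_def aHE by (rule apd[OF that])
    have "\<exists>k. \<forall>x\<in>UNIV. gradE x - H x = k"
    proof (rule has_derivative_zero_constant)
      fix x :: 'a
      have "((\<lambda>x. gradE x - H x) has_derivative (\<lambda>h. H h - H h)) (at x)"
        using E_twice[of x] bounded_linear_imp_has_derivative[OF blH]
        unfolding HEc by (rule has_derivative_diff)
      then show "((\<lambda>x. gradE x - H x) has_derivative (\<lambda>h. 0)) (at x within UNIV)" by simp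
    qed simp
    then obtain k where k: "\<And>x. gradE x - H x = k" by blast
    have "(\<lambda>v. gradE ustar \<bullet> v) = (\<lambda>h. 0)"
      using amin by (intro has_derivative_local_min[OF E_diff]) auto
    then have "gradE ustar \<bullet> gradE ustar = 0" by metis
    then have g0: "gradE ustar = 0" by simp
    have Hx: "H (P \<theta> - ustar) = g"
    proof -
      have "H (P \<theta> - ustar) = H (P \<theta>) - H ustar" by (rule linear_diff[OF lH])
      also have "\<dots> = (gradE (P \<theta>) - k) - (gradE ustar - k)"
      proof -
        have "H x = gradE x - k" for x using k[of x] by (simp add: algebra_simps)
        then show ?thesis by simp
      qed
      also have "\<dots> = g" using g0 by (simp add: g_def)
      finally show ?thesis .
    qed
    have gL': "\<And>k. egrad (E \<circ> P) \<theta> $ k = H (P \<theta> - ustar) \<bullet> DP \<theta> (axis k 1)"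
      by (simp only: gL Hx)
    have pd': "\<And>v. v \<noteq> 0 \<Longrightarrow> H v \<bullet> v > 0" using pd by blast
    have sym': "\<And>v w. H v \<bullet> w = H w \<bullet> v" using sym by blast
    show ?thesis
      unfolding aH
      using core[OF lD lH sym' pd' pinv[folded H_def] gL'] .

  qed
  show ?thesis using part1 part2 by blast
qed

end
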